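(* In the setting below, if the minimal semigroup $\{P(t)\}_{t\ge0}$ has an invariant density $\tilde f$ with $\tilde f>0$ $m$-a.e., then $\{P(t)\}_{t\ge0}$ is stochastic.
   Context: Setting: $(E,\mathcal{E},m)$ is a $\sigma$-finite measure space, $L^1=L^1(E,\mathcal{E},m)$, $L^1_+$ its nonnegative elements, $D(m)=\{f\in L^1_+:\|f\|=1\}$ the densities. A linear operator on $L^1$ is stochastic if it maps $D(m)$ into $D(m)$, substochastic if it is a positive contraction; a (sub)stochastic semigroup is a $C_0$-semigroup of (sub)stochastic operators. A substochastic operator $Q$ is extended to nonnegative measurable $f=\sup_n f_n$ ($0\le f_n\uparrow$, $f_n\in L^1_+$) by $Qf=\sup_nQf_n$ (possibly $+\infty$); $f\ge0$ measurable is subinvariant (invariant) for $Q$ if $Qf\le f$ ($Qf=f$), and for a semigroup if this holds for each $P(t)$. Let $P$ be a stochastic operator on $L^1$, $\varphi\colon E\to[0,\infty)$ measurable, and $\{S(t)\}_{t\ge0}$ a substochastic semigroup with generator $(A,\mathcal{D}(A))$ such that $\mathcal{D}(A)\subseteq L^1_\varphi=\{f\in L^1:\int\varphi|f|\,dm<\infty\}$ and $\int_E Af\,dm=-\int_E\varphi f\,dm$ for all $f\in\mathcal{D}(A)\cap L^1_+$. $R(\lambda,A)=(\lambda-A)^{-1}=\int_0^\infty e^{-\lambda s}S(s)\,ds$ for $\lambda>0$. The minimal semigroup $\{P(t)\}_{t\ge0}$ is the substochastic semigroup whose generator $(\mathcal{C},\mathcal{D}(\mathcal{C}))$ is given by $R(\lambda,\mathcal{C})f=\lim_{n\to\infty}R(\lambda,A)\sum_{k=0}^n(P(\varphi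 R(\lambda,A)))^kf$ for $f\in L^1$, $\lambda>0$; it satisfies $\mathcal{D}(A)\subseteq\mathcal{D}(\mathcal{C})$ and $\mathcal{C}f=Af+P(\varphi f)$ for $f\in\mathcal{D}(A)$. *)

theory Defs
  imports "HOL-Analysis.Analysis"
begin

text \<open>Elements of L1(E,F,m) are represented by integrable real functions on the
  measure space M; everything is understood up to m-a.e. equality.\<close>

definition aeq :: "'a measure \<Rightarrow> ('a \<Rightarrow> real) \<Rightarrow> ('a \<Rightarrow> real) \<Rightarrow> bool" where
  "aeq M f g \<longleftrightarrow> (AE x in M. f x = g x)"

definition l1norm :: "'a measure \<Rightarrow> ('a \<Rightarrow> real) \<Rightarrow> real" where
  "l1norm M f = (LINT x|M. \<bar>f x\<bar>)"

definition L1op :: "'a measure \<Rightarrow> (('a \<Rightarrow> real) \<Rightarrow> ('a \<Rightarrow> real)) \<Rightarrow> bool" where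
  "L1op M T \<longleftrightarrow>
     (\<forall>f. integrable M f \<longrightarrow> integrable M (T f)) \<and>
     (\<forall>f g. integrable M f \<longrightarrow> integrable M g \<longrightarrow> aeq M f g \<longrightarrow> aeq M (T f) (T g)) \<and>
     (\<forall>f g a b. integrable M f \<longrightarrow> integrable M g \<longrightarrow>
        aeq M (T (\<lambda>x. a * f x + b * g x)) (\<lambda>x. a * T f x + b * T g x))"

definition density_fun :: "'a measure \<Rightarrow> ('a \<Rightarrow> real) \<Rightarrow> bool" where
  "density_fun M f \<longleftrightarrow> integrable M f \<and> (AE x in M. 0 \<le> f x) \<and> integral\<^sup>L M f = 1"

definition stochastic_op :: "'a measure \<Rightarrow> (('a \<Rightarrow> real) \<Rightarrow> ('a \<Rightarrow> real)) \<Rightarrow> bool" where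
  "stochastic_op M T \<longleftrightarrow> L1op M T \<and> (\<forall>f. density_fun M f \<longrightarrow> density_fun M (T f))"

definition substochastic_op :: "'a measure \<Rightarrow> (('a \<Rightarrow> real) \<Rightarrow> ('a \<Rightarrow> real)) \<Rightarrow> bool" where
  "substochastic_op M T \<longleftrightarrow> L1op M T \<and>
     (\<forall>f. integrable M f \<longrightarrow> (AE x in M. 0 \<le> f x) \<longrightarrow> (AE x in M. 0 \<le> T f x)) \<and>
     (\<forall>f. integrable M f \<longrightarrow> l1norm M (T f) \<le> l1norm M f)"

text \<open>C0-semigroups on L1 (only times t \<ge> 0 are relevant).\<close>
definition c0_semigroup :: "'a measure \<Rightarrow> (real \<Rightarrow> ('a \<Rightarrow> real) \<Rightarrow> ('a \<Rightarrow> real)) \<Rightarrow> bool" where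
  "c0_semigroup M S \<longleftrightarrow>
     (\<forall>t\<ge>0. L1op M (S t)) \<and>
     (\<forall>f. integrable M f \<longrightarrow> aeq M (S 0 f) f) \<and>
     (\<forall>s t f. 0 \<le> s \<longrightarrow> 0 \<le> t \<longrightarrow> integrable M f \<longrightarrow> aeq M (S (s + t) f) (S s (S t f))) \<and>
     (\<forall>f. integrable M f \<longrightarrow> ((\<lambda>t. l1norm M (\<lambda>x. S t f x - f x)) \<longlongrightarrow> 0) (at_right 0))"

definition substochastic_semigroup :: "'a measure \<Rightarrow> (real \<Rightarrow> ('a \<Rightarrow> real) \<Rightarrow> ('a \<Rightarrow> real)) \<Rightarrow> bool" where
  "substochastic_semigroup M S \<longleftrightarrow> c0_semigroup M S \<and> (\<forall>t\<ge>0. substochastic_op M (S t))"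

definition stochastic_semigroup :: "'a measure \<Rightarrow> (real \<Rightarrow> ('a \<Rightarrow> real) \<Rightarrow> ('a \<Rightarrow> real)) \<Rightarrow> bool" where
  "stochastic_semigroup M S \<longleftrightarrow> c0_semigroup M S \<and> (\<forall>t\<ge>0. stochastic_op M (S t))"

definition is_generator :: "'a measure \<Rightarrow> (real \<Rightarrow> ('a \<Rightarrow> real) \<Rightarrow> ('a \<Rightarrow> real))
    \<Rightarrow> ('a \<Rightarrow> real) set \<Rightarrow> (('a \<Rightarrow> real) \<Rightarrow> ('a \<Rightarrow> real)) \<Rightarrow> bool" where
  "is_generator M S D A \<longleftrightarrow>
     D \<subseteq> {f. integrable M f} \<and>
     (\<forall>f. integrable M f \<longrightarrow>
        (f \<in> D \<longleftrightarrow> (\<exists>g. integrable M g \<and>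
           ((\<lambda>t. l1norm M (\<lambda>x. (S t f x - f x) / t - g x)) \<longlongrightarrow> 0) (at_right 0)))) \<and>
     (\<forall>f\<in>D. integrable M (A f) \<and>
        ((\<lambda>t. l1norm M (\<lambda>x. (S t f x - f x) / t - A f x)) \<longlongrightarrow> 0) (at_right 0))"

definition is_resolvent :: "'a measure \<Rightarrow> ('a \<Rightarrow> real) set \<Rightarrow> (('a \<Rightarrow> real) \<Rightarrow> ('a \<Rightarrow> real))
    \<Rightarrow> (real \<Rightarrow> ('a \<Rightarrow> real) \<Rightarrow> ('a \<Rightarrow> real)) \<Rightarrow> bool" where
  "is_resolvent M D A R \<longleftrightarrow>
     (\<forall>lam>0. \<forall>f. integrable M f \<longrightarrow>
        R lam f \<in> D \<and> aeq M (\<lambda>x. lam * R lam f x - A (R lam f) x) f)"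

end

theory Submission
  imports Defs
begin

lemma key:
  assumes T: "substochastic_op M T" and ft: "density_fun M ft" and pos: "AE x in M. 0 < ft x"
    and inv: "aeq M (T ft) ft" and f: "density_fun M f"
  shows "density_fun M (T f)"
proof -
  have L: "L1op M T" and Tpos: "\<And>g. integrable M g \<Longrightarrow> AE x in M. 0 \<le> g x \<Longrightarrow> AE x in M. 0 \<le> T g x"
    and Tn: "\<And>g. integrable M g \<Longrightarrow> l1norm M (T g) \<le> l1norm M g"
    using T unfolding substochastic_op_def by auto
  have Ti: "\<And>g. integrable M g \<Longrightarrow> integrable M (T g)" 
    and Tlin: "\<And>g h a b. integrable M g \<Longrightarrow> integrable M h \<Longrightarrow> aeq M (T (\<lambda>x. a * g x + b * h x)) (\<lambda>x. a * T g x + b * T h x)"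
    using L unfolding L1op_def by auto
  have fi: "integrable M f" and f0: "AE x in M. 0 \<le> f x" and f1: "integral\<^sup>L M f = 1"
    using f unfolding density_fun_def by auto
  have fti: "integrable M ft" and ft1: "integral\<^sup>L M ft = 1"
    using ft unfolding density_fun_def by auto
  have Tft1: "integral\<^sup>L M (T ft) = 1"
    using inv ft1 unfolding aeq_def by (metis integral_cong_AE Ti fti borel_measurable_integrable)
  have absint: "\<And>g. integrable M g \<Longrightarrow> AE x in M. 0 \<le> g x \<Longrightarrow> l1norm M g = integral\<^sup>L M g"
    unfolding l1norm_def by (rule integral_cong_AE) auto
  define h where "h n x = min (f x) (real n * ft x)" for n x
  have hi: "integrable M (h n)" for n unfolding h_def using fi fti by auto
  have step: "integral\<^sup>L M (h n) \<le> integral\<^sup>L M (T f)" for n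
  proof -
    let ?g = "\<lambda>x. real n * ft x + (-1) * h n x"
    have gi: "integrable M ?g" using hi fti by auto
    have g0: "AE x in M. 0 \<le> ?g x" using pos by eventually_elim (auto simp: h_def)
    have "AE x in M. 0 \<le> T ?g x" using Tpos[OF gi g0] .
    moreover have "aeq M (T ?g) (\<lambda>x. real n * T ft x + (-1) * T (h n) x)"
      using Tlin[OF fti hi] .
    ultimately have A1: "AE x in M. T ?g x = real n * T ft x + (-1) * T (h n) x \<and> 0 \<le> T ?g x"
      unfolding aeq_def by eventually_elim auto
    have "l1norm M (T ?g) = integral\<^sup>L M (\<lambda>x. real n * T ft x + (-1) * T (h n) x)"
      unfolding l1norm_def by (rule integral_cong_AE) (use Ti[OF gi] Ti[OF fti] Ti[OF hi] A1 in \<open>auto elim!: AE_mp\<close>)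
    also have "\<dots> = real n - integral\<^sup>L M (T (h n))"
      using Ti[OF fti] Ti[OF hi] Tft1 by simp
    finally have 1: "l1norm M (T ?g) = real n - integral\<^sup>L M (T (h n))" .
    have "l1norm M ?g = integral\<^sup>L M ?g" using absint[OF gi g0] .
    also have "\<dots> = real n - integral\<^sup>L M (h n)" using fti hi ft1 by simp
    finally have 2: "l1norm M ?g = real n - integral\<^sup>L M (h n)" .
    have ih: "integral\<^sup>L M (h n) \<le> integral\<^sup>L M (T (h n))" using Tn[OF gi] 1 2 by simp
    let ?k = "\<lambda>x. 1 * h n x + 1 * (f x - h n x)"
    have ki: "integrable M (\<lambda>x. f x - h n x)" using fi hi by auto
    have k0: "AE x in M. 0 \<le> f x - h n x" by (auto simp: h_def)
    have Tk0: "AE x in M. 0 \<le> T (\<lambda>x. f x - h n x) x" using Tpos[OF ki k0] .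
    have "?k = f" by auto
    moreover have "aeq M (T ?k) (\<lambda>x. 1 * T (h n) x + 1 * T (\<lambda>x. f x - h n x) x)"
      by (rule Tlin[OF hi ki])
    ultimately have "aeq M (T f) (\<lambda>x. 1 * T (h n) x + 1 * T (\<lambda>x. f x - h n x) x)"
      by simp
    hence "integral\<^sup>L M (T f) = integral\<^sup>L M (\<lambda>x. T (h n) x + T (\<lambda>x. f x - h n x) x)"
      unfolding aeq_def by (intro integral_cong_AE) (use Ti[OF fi] Ti[OF hi] Ti[OF ki] in auto)
    also have "\<dots> = integral\<^sup>L M (T (h n)) + integral\<^sup>L M (T (\<lambda>x. f x - h n x))"
      using Ti[OF hi] Ti[OF ki] by simp
    also have "integral\<^sup>L M (T (\<lambda>x. f x - h n x)) \<ge> 0"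
      using Tk0 by (rule integral_nonneg_AE)
    ultimately show ?thesis using ih by linarith
  qed
  have lim: "(\<lambda>n. integral\<^sup>L M (h n)) \<longlonglongrightarrow> integral\<^sup>L M f"
  proof (rule integral_dominated_convergence[where w="\<lambda>x. \<bar>f x\<bar>"])
    show "f \<in> borel_measurable M" using fi by auto
    show "\<And>i. h i \<in> borel_measurable M" using hi by auto
    show "integrable M (\<lambda>x. \<bar>f x\<bar>)" using fi by auto
    show "AE x in M. (\<lambda>i. h i x) \<longlonglongrightarrow> f x"
      using pos
    proof eventually_elim
      case (elim x)
      obtain N :: nat where N: "f x / ft x \<le> real N" using real_arch_simple by blast
      have "eventually (\<lambda>n. h n x = f x) sequentially"
        unfolding eventually_sequentially
      proof (intro exI allI impI)
        fix n assume "N \<le> n"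
        hence "f x / ft x \<le> real n" using N by (meson of_nat_le_iff order_trans)
        hence "f x \<le> real n * ft x" using elim by (simp add: divide_le_eq)
        thus "h n x = f x" by (simp add: h_def)
      qed
      thus ?case by (rule tendsto_eventually)
    qed
    show "\<And>i. AE x in M. norm (h i x) \<le> \<bar>f x\<bar>"
    proof -
      fix i show "AE x in M. norm (h i x) \<le> \<bar>f x\<bar>" using f0 pos
        by eventually_elim (auto simp: h_def)
    qed
  qed
  have ge: "1 \<le> integral\<^sup>L M (T f)"
    using f1 lim step by (metis LIMSEQ_le_const2)
  have T0: "AE x in M. 0 \<le> T f x" using Tpos[OF fi f0] .
  have "integral\<^sup>L M (T f) = l1norm M (T f)" using absint[OF Ti[OF fi] T0] by simp
  also have "\<dots> \<le> l1norm M f" using Tn[OF fi] .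
  also have "\<dots> = 1" using absint[OF fi f0] f1 by simp
  finally show ?thesis using ge Ti[OF fi] T0 unfolding density_fun_def by auto
qed

theorem mainTheorem6:
  fixes M :: "'a measure"
    and P :: "('a \<Rightarrow> real) \<Rightarrow> ('a \<Rightarrow> real)"
    and \<phi> :: "'a \<Rightarrow> real"
    and S :: "real \<Rightarrow> ('a \<Rightarrow> real) \<Rightarrow> ('a \<Rightarrow> real)"
    and DA :: "('a \<Rightarrow> real) set"
    and A :: "('a \<Rightarrow> real) \<Rightarrow> ('a \<Rightarrow> real)"
    and RA :: "real \<Rightarrow> ('a \<Rightarrow> real) \<Rightarrow> ('a \<Rightarrow> real)"
    and Pt :: "real \<Rightarrow> ('a \<Rightarrow> real) \<Rightarrow> ('a \<Rightarrow> real)"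
    and DC :: "('a \<Rightarrow> real) set"
    and C :: "('a \<Rightarrow> real) \<Rightarrow> ('a \<Rightarrow> real)"
    and RC :: "real \<Rightarrow> ('a \<Rightarrow> real) \<Rightarrow> ('a \<Rightarrow> real)"
    and ft :: "'a \<Rightarrow> real"
  assumes "sigma_finite_measure M"
    and "stochastic_op M P"
    and "\<phi> \<in> borel_measurable M"
    and "\<forall>x\<in>space M. 0 \<le> \<phi> x"
    and "substochastic_semigroup M S"
    and "is_generator M S DA A"
    and "\<forall>f\<in>DA. integrable M (\<lambda>x. \<phi> x * f x)"
    and "\<forall>f\<in>DA. (AE x in M. 0 \<le> f x) \<longrightarrow>
           integral\<^sup>L M (A f) = - integral\<^sup>L M (\<lambda>x. \<phi> x * f x)"
    and "is_resolvent M DA A RA"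
    and "substochastic_semigroup M Pt"
    and "is_generator M Pt DC C"
    and "is_resolvent M DC C RC"
    and "\<forall>lam>0. \<forall>f. integrable M f \<longrightarrow>
           ((\<lambda>n. l1norm M (\<lambda>x.
               RA lam (\<lambda>y. \<Sum>k\<le>n. (((\<lambda>h. P (\<lambda>z. \<phi> z * RA lam h z)) ^^ k) f) y) x
               - RC lam f x)) \<longlonglongrightarrow> 0)"
    and "density_fun M ft"
    and "AE x in M. 0 < ft x"
    and "\<forall>t\<ge>0. aeq M (Pt t ft) ft"
  shows "stochastic_semigroup M Pt"
proof -
  have sg: "substochastic_semigroup M Pt" by fact
  hence c0: "c0_semigroup M Pt" and sub: "\<forall>t\<ge>0. substochastic_op M (Pt t)"
    unfolding substochastic_semigroup_def by auto
  show ?thesis unfolding stochastic_semigroup_def stochastic_op_def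
  proof (intro conjI c0 allI impI)
    fix t :: real assume t: "0 \<le> t"
    show "L1op M (Pt t)" using sub t unfolding substochastic_op_def by auto
    fix f assume "density_fun M f"
    thus "density_fun M (Pt t f)"
      using key[OF _ assms(14) assms(15)] sub t assms(16) by auto
  qed
qed

end
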